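(* Let $V=[n]$, let $F:2^V\to\mathbb{R}$ be a submodular set function, $Z=\sum_{S\subseteq V}\exp(F(S))$, and for $x\in(0,1)^n$ let $$\mathrm{KL}(x)=-\sum_{S\subseteq V}\prod_{i\in S}x_i\prod_{j\notin S}(1-x_j)\,F(S)+\sum_{i=1}^n\big[x_i\log x_i+(1-x_i)\log(1-x_i)\big]+\log Z.$$ Then $\mathrm{KL}$ is DR-supermodular on $(0,1)^n$.
   Context: A function $h$ on a product of intervals is DR-submodular if for all $a\le b$ (componentwise) in its domain, all $i\in[n]$, and all $k\ge0$ with $a+ke_i,b+ke_i$ in the domain, $h(a+ke_i)-h(a)\ge h(b+ke_i)-h(b)$; $h$ is DR-supermodular if $-h$ is DR-submodular. $F$ submodular means $F(A)+F(B)\ge F(A\cup B)+F(A\cap B)$ for all $A,B\subseteq V$. *)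

theory Defs
  imports "HOL-Analysis.Analysis"
begin

definition submodular_on :: "nat set \<Rightarrow> (nat set \<Rightarrow> real) \<Rightarrow> bool" where
  "submodular_on V F \<longleftrightarrow>
     (\<forall>A B. A \<subseteq> V \<longrightarrow> B \<subseteq> V \<longrightarrow> F A + F B \<ge> F (A \<union> B) + F (A \<inter> B))"

text \<open>Points of R^n are represented as functions nat => real that vanish outside {0..<n}.
  The open unit cube (0,1)^n:\<close>

definition open_cube :: "nat \<Rightarrow> (nat \<Rightarrow> real) set" where
  "open_cube n = {x. (\<forall>i<n. 0 < x i \<and> x i < 1) \<and> (\<forall>i\<ge>n. x i = 0)}"

definition DR_submodular_on :: "nat \<Rightarrow> (nat \<Rightarrow> real) set \<Rightarrow> ((nat \<Rightarrow> real) \<Rightarrow> real) \<Rightarrow> bool" where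
  "DR_submodular_on n D h \<longleftrightarrow>
     (\<forall>a b i k. a \<in> D \<longrightarrow> b \<in> D \<longrightarrow> (\<forall>j<n. a j \<le> b j) \<longrightarrow> i < n \<longrightarrow> k \<ge> 0 \<longrightarrow>
        a(i := a i + k) \<in> D \<longrightarrow> b(i := b i + k) \<in> D \<longrightarrow>
        h (a(i := a i + k)) - h a \<ge> h (b(i := b i + k)) - h b)"

definition DR_supermodular_on :: "nat \<Rightarrow> (nat \<Rightarrow> real) set \<Rightarrow> ((nat \<Rightarrow> real) \<Rightarrow> real) \<Rightarrow> bool" where
  "DR_supermodular_on n D h \<longleftrightarrow> DR_submodular_on n D (\<lambda>x. - h x)"

definition partition_fn :: "nat \<Rightarrow> (nat set \<Rightarrow> real) \<Rightarrow> real" where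
  "partition_fn n F = (\<Sum>S\<in>Pow {0..<n}. exp (F S))"

definition KL :: "nat \<Rightarrow> (nat set \<Rightarrow> real) \<Rightarrow> (nat \<Rightarrow> real) \<Rightarrow> real" where
  "KL n F x =
     - (\<Sum>S\<in>Pow {0..<n}. (\<Prod>i\<in>S. x i) * (\<Prod>j\<in>{0..<n} - S. 1 - x j) * F S)
     + (\<Sum>i<n. x i * ln (x i) + (1 - x i) * ln (1 - x i))
     + ln (partition_fn n F)"

end

theory Submission
  imports Defs
begin

definition wt :: "nat set \<Rightarrow> (nat\<Rightarrow>real) \<Rightarrow> nat set \<Rightarrow> real" where
  "wt V x S = (\<Prod>i\<in>S. x i) * (\<Prod>j\<in>V - S. 1 - x j)"

definition EE :: "nat set \<Rightarrow> (nat\<Rightarrow>real) \<Rightarrow> (nat set \<Rightarrow> real) \<Rightarrow> real" where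
  "EE V x G = (\<Sum>S\<in>Pow V. wt V x S * G S)"

definition phi :: "real \<Rightarrow> real" where
  "phi t = t * ln t + (1 - t) * ln (1 - t)"

lemma EE_insert:
  assumes "finite V" "j \<notin> V"
  shows "EE (insert j V) x G = x j * EE V x (\<lambda>S. G (insert j S)) + (1 - x j) * EE V x G"
proof -
  have inj: "inj_on (insert j) (Pow V)" using assms(2) unfolding inj_on_def
    by (metis PowD insert_ident subsetD)
  have fin: "finite (Pow V)" using assms(1) by simp
  have w0: "wt (insert j V) x S = (1 - x j) * wt V x S" if "S \<subseteq> V" for S
  proof -
    have "insert j V - S = insert j (V - S)" using that assms(2) by auto
    thus ?thesis unfolding wt_def using assms by (simp add: algebra_simps)
  qed
  have w1: "wt (insert j V) x (insert j S) = x j * wt V x S" if "S \<subseteq> V" for S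
  proof -
    have "insert j V - insert j S = V - S" using that assms(2) by auto
    moreover have "finite S" using that assms(1) finite_subset by blast
    moreover have "j \<notin> S" using that assms(2) by auto
    ultimately show ?thesis unfolding wt_def by (simp add: algebra_simps)
  qed
  have "EE (insert j V) x G = (\<Sum>S\<in>Pow V. wt (insert j V) x S * G S)
        + (\<Sum>S\<in>insert j ` Pow V. wt (insert j V) x S * G S)"
    unfolding EE_def Pow_insert using assms fin
    by (intro sum.union_disjoint) auto
  also have "(\<Sum>S\<in>insert j ` Pow V. wt (insert j V) x S * G S)
      = (\<Sum>S\<in>Pow V. wt (insert j V) x (insert j S) * G (insert j S))"
    using sum.reindex[OF inj] by (simp add: comp_def)
  also have "\<dots> = (\<Sum>S\<in>Pow V. x j * (wt V x S * G (insert j S)))"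
    by (intro sum.cong refl) (simp add: w1)
  also have "(\<Sum>S\<in>Pow V. wt (insert j V) x S * G S) = (\<Sum>S\<in>Pow V. (1 - x j) * (wt V x S * G S))"
    by (intro sum.cong refl) (simp add: w0)
  finally show ?thesis unfolding EE_def by (simp add: sum_distrib_left[symmetric] add.commute)
qed

lemma wt_nonneg: "(\<forall>j\<in>V. 0 \<le> x j \<and> x j \<le> 1) \<Longrightarrow> S \<subseteq> V \<Longrightarrow> 0 \<le> wt V x S"
  unfolding wt_def by (intro mult_nonneg_nonneg prod_nonneg) auto

lemma EE_mono_G:
  assumes "\<forall>j\<in>V. 0 \<le> x j \<and> x j \<le> 1" "\<forall>S. S \<subseteq> V \<longrightarrow> G S \<le> H S"
  shows "EE V x G \<le> EE V x H"
  unfolding EE_def using assms wt_nonneg[OF assms(1)]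
  by (intro sum_mono mult_left_mono) auto

lemma EE_cong: "(\<forall>j\<in>V. x j = y j) \<Longrightarrow> EE V x G = EE V y G"
  unfolding EE_def wt_def
  by (intro sum.cong refl arg_cong2[where f="(*)"] prod.cong) auto

lemma EE_mono_x:
  assumes "finite V" "\<forall>S T. S \<subseteq> T \<longrightarrow> T \<subseteq> V \<longrightarrow> G T \<le> G S"
    "\<forall>j\<in>V. 0 \<le> a j \<and> a j \<le> b j \<and> b j \<le> 1"
  shows "EE V b G \<le> EE V a G"
  using assms
proof (induction V arbitrary: G rule: finite_induct)
  case empty
  then show ?case by (simp add: EE_def wt_def)
next
  case (insert j V)
  define G1 where "G1 = (\<lambda>S. G (insert j S))"
  have anti1: "\<forall>S T. S \<subseteq> T \<longrightarrow> T \<subseteq> V \<longrightarrow> G1 T \<le> G1 S"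
    unfolding G1_def using insert.prems(1) by (metis insert_mono subset_insertI2 insert_mono)
  have anti0: "\<forall>S T. S \<subseteq> T \<longrightarrow> T \<subseteq> V \<longrightarrow> G T \<le> G S"
    using insert.prems(1) by blast
  have ab: "\<forall>j\<in>V. 0 \<le> a j \<and> a j \<le> b j \<and> b j \<le> 1" using insert.prems(2) by auto
  have i1: "EE V b G1 \<le> EE V a G1" using insert.IH[OF anti1 ab] .
  have i0: "EE V b G \<le> EE V a G" using insert.IH[OF anti0 ab] .
  have a01: "\<forall>j\<in>V. 0 \<le> a j \<and> a j \<le> 1" using ab by force
  have pq: "EE V a G1 \<le> EE V a G"
    by (rule EE_mono_G[OF a01]) (auto simp: G1_def intro: insert.prems(1)[rule_format])
  have bj: "0 \<le> a j" "a j \<le> b j" "b j \<le> 1" using insert.prems(2) by auto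
  have "EE (insert j V) b G = b j * EE V b G1 + (1 - b j) * EE V b G"
    using EE_insert[OF insert.hyps] G1_def by simp
  also have "\<dots> \<le> b j * EE V a G1 + (1 - b j) * EE V a G"
    using bj i1 i0 by (intro add_mono mult_left_mono) auto
  also have "\<dots> = EE V a G + b j * (EE V a G1 - EE V a G)" by (simp add: algebra_simps)
  also have "\<dots> \<le> EE V a G + a j * (EE V a G1 - EE V a G)"
    using mult_right_mono_neg[OF bj(2), of "EE V a G1 - EE V a G"] pq by simp
  also have "\<dots> = a j * EE V a G1 + (1 - a j) * EE V a G" by (simp add: algebra_simps)
  also have "\<dots> = EE (insert j V) a G"
    using EE_insert[OF insert.hyps] G1_def by simp
  finally show ?case .
qed

lemma phi_deriv: "0 < u \<Longrightarrow> u < 1 \<Longrightarrow> (phi has_real_derivative (ln u - ln (1-u))) (at u)"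
  unfolding phi_def[abs_def]
  by ((rule derivative_eq_intros refl | simp)+)

lemma phi_cont: "0 < u \<Longrightarrow> u < 1 \<Longrightarrow> isCont phi u"
  using phi_deriv DERIV_isCont by blast

lemma phi_conv:
  assumes "0 < s" "s \<le> t" "t + k < 1" "0 \<le> k"
  shows "phi (s + k) - phi s \<le> phi (t + k) - phi t"
proof -
  let ?h = "\<lambda>u. phi (u + k) - phi u"
  have "?h s \<le> ?h t"
  proof (rule DERIV_nonneg_imp_increasing_open[OF assms(2)])
    fix u assume u: "s < u" "u < t"
    have d: "(?h has_real_derivative ((ln (u+k) - ln (1-(u+k))) - (ln u - ln (1-u)))) (at u)"
      using u assms phi_deriv[of "u+k"] phi_deriv[of u] DERIV_shift[of phi _ u k]
      by (intro DERIV_diff) auto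
    have "ln u \<le> ln (u+k)" "ln (1-(u+k)) \<le> ln (1-u)" using u assms by auto
    thus "\<exists>y. (?h has_real_derivative y) (at u) \<and> 0 \<le> y" using d by (intro exI[of _ "(ln (u+k) - ln (1-(u+k))) - (ln u - ln (1-u))"]) auto
  next
    show "continuous_on {s..t} ?h" using assms
      by (intro continuous_at_imp_continuous_on ballI continuous_intros isCont_o2[OF _ phi_cont] phi_cont) auto
  qed
  thus ?thesis .
qed

lemma KL_eq: "KL n F x = - EE {0..<n} x F + (\<Sum>l<n. phi (x l)) + ln (partition_fn n F)"
  by (simp add: KL_def EE_def wt_def phi_def)

lemma sum_upd:
  fixes n :: nat
  assumes "i < n"
  shows "(\<Sum>l<n. phi ((x(i:=v)) l)) = (\<Sum>l<n. phi (x l)) - phi (x i) + phi v"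
proof -
  have f: "finite {..<n}" "i \<in> {..<n}" using assms by simp_all
  have "(\<Sum>l<n. phi ((x(i:=v)) l)) = phi v + (\<Sum>l\<in>{..<n}-{i}. phi ((x(i:=v)) l))"
    using sum.remove[OF f, of "\<lambda>l. phi ((x(i:=v)) l)"] by simp
  also have "(\<Sum>l\<in>{..<n}-{i}. phi ((x(i:=v)) l)) = (\<Sum>l\<in>{..<n}-{i}. phi (x l))"
    by (intro sum.cong) auto
  also have "\<dots> = (\<Sum>l<n. phi (x l)) - phi (x i)"
    using sum.remove[OF f, of "\<lambda>l. phi (x l)"] by simp
  finally show ?thesis by simp
qed

lemma EE_split:
  assumes "i < n"
  shows "EE {0..<n} (x(i:=v)) F = v * EE ({0..<n}-{i}) x (\<lambda>S. F (insert i S)) + (1-v) * EE ({0..<n}-{i}) x F"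
proof -
  have V: "{0..<n} = insert i ({0..<n}-{i})" using assms by auto
  have c: "\<forall>j\<in>{0..<n}-{i}. (x(i:=v)) j = x j" by auto
  have "EE {0..<n} (x(i:=v)) F = EE (insert i ({0..<n}-{i})) (x(i:=v)) F" using V by simp
  also have "\<dots> = (x(i:=v)) i * EE ({0..<n}-{i}) (x(i:=v)) (\<lambda>S. F (insert i S)) + (1 - (x(i:=v)) i) * EE ({0..<n}-{i}) (x(i:=v)) F"
    by (rule EE_insert) auto
  finally show ?thesis using EE_cong[OF c] by simp
qed

theorem mainTheorem14:
  fixes n :: nat and F :: "nat set \<Rightarrow> real"
  assumes "submodular_on {0..<n} F"
  shows "DR_supermodular_on n (open_cube n) (KL n F)"
  unfolding DR_supermodular_on_def DR_submodular_on_def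
proof (intro allI impI)
  fix a b :: "nat \<Rightarrow> real" and i :: nat and k :: real
  assume a: "a \<in> open_cube n" and b: "b \<in> open_cube n" and ab: "\<forall>j<n. a j \<le> b j"
    and i: "i < n" and k: "0 \<le> k" and a': "a(i := a i + k) \<in> open_cube n"
    and b': "b(i := b i + k) \<in> open_cube n"
  define W where "W = {0..<n} - {i}"
  define C where "C = ln (partition_fn n F)"
  define D where "D = (\<lambda>x. EE W x (\<lambda>S. F (insert i S)) - EE W x F)"
  have diff: "KL n F (x(i := x i + k)) - KL n F x = - k * D x + (phi (x i + k) - phi (x i))" for x
  proof -
    have e1: "EE {0..<n} (x(i := x i + k)) F = (x i + k) * EE W x (\<lambda>S. F (insert i S)) + (1 - (x i + k)) * EE W x F"
      using EE_split[OF i] W_def by simp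
    have e0: "EE {0..<n} x F = x i * EE W x (\<lambda>S. F (insert i S)) + (1 - x i) * EE W x F"
      using EE_split[OF i, of x "x i" F] W_def by simp
    show ?thesis unfolding KL_eq sum_upd[OF i] e1 e0 D_def by (simp add: algebra_simps)
  qed
  have Dmono: "D b \<le> D a"
  proof -
    have DD: "D x = EE W x (\<lambda>S. F (insert i S) - F S)" for x
      unfolding D_def EE_def by (simp add: sum_subtractf algebra_simps)
    have anti: "\<forall>S T. S \<subseteq> T \<longrightarrow> T \<subseteq> W \<longrightarrow> F (insert i T) - F T \<le> F (insert i S) - F S"
    proof (intro allI impI)
      fix S T assume ST: "S \<subseteq> T" "T \<subseteq> W"
      have "insert i S \<subseteq> {0..<n}" "T \<subseteq> {0..<n}" using ST i W_def by auto
      then have "F (insert i S) + F T \<ge> F (insert i S \<union> T) + F (insert i S \<inter> T)"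
        using assms unfolding submodular_on_def by blast
      moreover have "insert i S \<union> T = insert i T" "insert i S \<inter> T = S" using ST W_def by auto
      ultimately show "F (insert i T) - F T \<le> F (insert i S) - F S" by simp
    qed
    have cond: "\<forall>j\<in>W. 0 \<le> a j \<and> a j \<le> b j \<and> b j \<le> 1"
      using a b ab unfolding W_def open_cube_def by (auto simp: less_imp_le)
    show ?thesis unfolding DD by (rule EE_mono_x[OF _ anti cond]) (simp add: W_def)
  qed
  have ph: "phi (a i + k) - phi (a i) \<le> phi (b i + k) - phi (b i)"
  proof (rule phi_conv)
    show "0 < a i" using a i unfolding open_cube_def by auto
    show "a i \<le> b i" using ab i by auto
    show "b i + k < 1" using b' i unfolding open_cube_def by auto
    show "0 \<le> k" by fact
  qed
  have "k * D b \<le> k * D a" using mult_left_mono[OF Dmono k] .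
  then show "- KL n F (b(i := b i + k)) - - KL n F b \<le> - KL n F (a(i := a i + k)) - - KL n F a"
    using diff[of a] diff[of b] ph by linarith
qed

end
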